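(* Let $p$ be a prime with $p\equiv 1\pmod 4$, let $a$ be a generator of $\mathbb{F}_p^*$, let $k=\frac{p-1}{4}$, $\theta=\exp\!\left(\frac{2\pi i}{p-1}\right)$ and $\eta=\exp\!\left(\frac{2\pi i}{p}\right)$. For $0\le x<p$ define $\varphi_x\in\mathbb{C}(\mathbb{F}_p)$ by $$\varphi_x(n)=\begin{cases}\dfrac{1}{\sqrt{p}}\,\eta^{2^{-1}a^k n^2}, & x=0,\\[2mm] \dfrac{1}{\sqrt{p(p-1)}}\displaystyle\sum_{j=1}^{p-1}\theta^{x\log_a j}\,\eta^{a^k(j-n)^2-2^{-1}a^k n^2}, & 0<x<p,\end{cases}\qquad n\in\mathbb{F}_p.$$ Then for every $0\le x<p$, $\varphi_x$ is an eigenvector of the discrete Fourier transform $F$ with eigenvalue $(-i)^x$, where $i=\sqrt{-1}$; that is, $F\varphi_x=(-i)^x\varphi_x$.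
   Context: $\mathbb{C}(\mathbb{F}_p)$ is the space of functions $\mathbb{F}_p\to\mathbb{C}$. The discrete Fourier transform is $F[\varphi](m)=\frac{1}{\sqrt{p}}\sum_{n\in\mathbb{F}_p}\eta^{mn}\varphi(n)$. Exponents of $\eta$ are computed in $\mathbb{F}_p$ (with $2^{-1}$ the inverse of $2$ in $\mathbb{F}_p$ and $a^k\in\mathbb{F}_p$); for $j\in\mathbb{F}_p^*$, $\log_a j$ is the unique $m\in\{0,\dots,p-2\}$ with $a^m=j$. *)

theory Defs
  imports "HOL-Analysis.Analysis" "HOL-Number_Theory.Number_Theory"
begin

text \<open>F_p is modelled by the residues 0..p-1 (nat); functions F_p -> C are functions
  nat => complex, of which only the values on {0..<p} matter.\<close>

definition eta_pow :: "nat \<Rightarrow> int \<Rightarrow> complex" where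
  "eta_pow p e = exp (2 * pi * \<i> * of_int (e mod int p) / of_nat p)"

definition theta :: "nat \<Rightarrow> complex" where
  "theta p = exp (2 * pi * \<i> / of_nat (p - 1))"

definition inv2 :: "nat \<Rightarrow> int" where
  "inv2 p = (THE t. 0 \<le> t \<and> t < int p \<and> [2 * t = 1] (mod int p))"

definition dlog :: "nat \<Rightarrow> nat \<Rightarrow> nat \<Rightarrow> nat" where
  "dlog p a j = (THE m. m \<le> p - 2 \<and> [a ^ m = j] (mod p))"

definition DFT :: "nat \<Rightarrow> (nat \<Rightarrow> complex) \<Rightarrow> nat \<Rightarrow> complex" where
  "DFT p \<phi> m = (1 / sqrt (real p)) * (\<Sum>n<p. eta_pow p (int m * int n) * \<phi> n)"

definition phi :: "nat \<Rightarrow> nat \<Rightarrow> nat \<Rightarrow> nat \<Rightarrow> complex" where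
  "phi p a x n =
    (let k = (p - 1) div 4; ak = int a ^ k in
     if x = 0 then (1 / sqrt (real p)) * eta_pow p (inv2 p * ak * int n ^ 2)
     else (1 / sqrt (real p * real (p - 1))) *
       (\<Sum>j\<in>{1..p-1}. theta p ^ (x * dlog p a j) *
          eta_pow p (ak * (int j - int n) ^ 2 - inv2 p * ak * int n ^ 2)))"

end

theory Submission
  imports Defs
begin

definition qb :: "complex \<Rightarrow> nat \<Rightarrow> nat \<Rightarrow> complex" where
  "qb w m i = (\<Prod>j<i. (1 - w ^ (m - j))) / (\<Prod>j<i. (1 - w ^ Suc j))"

definition qF :: "complex \<Rightarrow> nat \<Rightarrow> complex" where
  "qF w m = (\<Sum>i\<le>m. (-1) ^ i * qb w m i)"

lemma qb_0 [simp]: "qb w m 0 = 1" by (simp add: qb_def)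

lemma qb_zero: assumes "m < i" shows "qb w m i = 0"
proof -
  have "(\<Prod>j<i. (1 - w ^ (m - j))) = 0" using assms by (intro prod_zero) (auto intro!: bexI[of _ m])
  then show ?thesis by (simp add: qb_def)
qed

lemma den_nz: fixes w :: complex assumes "\<And>j. 0 < j \<Longrightarrow> j \<le> i \<Longrightarrow> w ^ j \<noteq> 1"
  shows "(\<Prod>j<i. (1 - w ^ Suc j)) \<noteq> 0"
proof -
  have "\<forall>j\<in>{..<i}. 1 - w ^ Suc j \<noteq> 0"
  proof
    fix j assume "j \<in> {..<i}"
    then have "w ^ Suc j \<noteq> 1" by (intro assms) auto
    then show "1 - w ^ Suc j \<noteq> 0" by auto
  qed
  then show ?thesis by (subst prod_zero_iff) auto
qed

lemma num_shift: "(\<Prod>j<Suc i. (1 - w ^ (Suc m - j))) = (1 - w ^ Suc m) * (\<Prod>j<i. (1 - w ^ (m - j)))"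
  by (simp only: prod.lessThan_Suc_shift) simp

lemma qb_P:
  assumes nz: "\<And>j. 0 < j \<Longrightarrow> j \<le> Suc i \<Longrightarrow> w ^ j \<noteq> 1"
  shows "qb w (Suc m) (Suc i) = qb w m i + w ^ Suc i * qb w m (Suc i)"
proof -
  define X where "X = (\<Prod>j<i. (1 - w ^ (m - j)))"
  define D where "D = (\<Prod>j<i. (1 - w ^ Suc j))"
  have D: "D \<noteq> 0" unfolding D_def using nz by (intro den_nz) auto
  have d: "1 - w ^ Suc i \<noteq> 0" using nz[of "Suc i"] by auto
  have e1: "qb w (Suc m) (Suc i) = (1 - w ^ Suc m) * X / (D * (1 - w ^ Suc i))"
    unfolding qb_def X_def D_def num_shift by (simp add: prod.lessThan_Suc)
  have e2: "qb w m i = X / D" unfolding qb_def X_def D_def ..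
  have e3: "qb w m (Suc i) = X * (1 - w ^ (m - i)) / (D * (1 - w ^ Suc i))"
    unfolding qb_def X_def D_def by (simp add: prod.lessThan_Suc)
  show ?thesis
  proof (cases "i \<le> m")
    case True
    then have pw: "w ^ Suc i * w ^ (m - i) = w ^ Suc m" by (simp add: power_add[symmetric])
    show ?thesis unfolding e1 e2 e3 using D d pw
      by (simp add: field_simps)
  next
    case False
    then have "X = 0" unfolding X_def by (intro prod_zero) (auto intro!: bexI[of _ m])
    then show ?thesis unfolding e1 e2 e3 by simp
  qed
qed

lemma qb_Q:
  assumes nz: "\<And>j. 0 < j \<Longrightarrow> j \<le> Suc i \<Longrightarrow> w ^ j \<noteq> 1"
  shows "(1 - w ^ Suc i) * qb w (Suc m) (Suc i) = (1 - w ^ Suc m) * qb w m i"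
proof -
  define X where "X = (\<Prod>j<i. (1 - w ^ (m - j)))"
  define D where "D = (\<Prod>j<i. (1 - w ^ Suc j))"
  have D: "D \<noteq> 0" unfolding D_def using nz by (intro den_nz) auto
  have d: "1 - w ^ Suc i \<noteq> 0" using nz[of "Suc i"] by auto
  have e1: "qb w (Suc m) (Suc i) = (1 - w ^ Suc m) * X / (D * (1 - w ^ Suc i))"
    unfolding qb_def X_def D_def num_shift by (simp add: prod.lessThan_Suc)
  have e2: "qb w m i = X / D" unfolding qb_def X_def D_def ..
  show ?thesis unfolding e1 e2 using D d by (simp add: field_simps)
qed

lemma qF_step:
  assumes nz: "\<And>j. 0 < j \<Longrightarrow> j \<le> m + 2 \<Longrightarrow> w ^ j \<noteq> 1"
  shows "qF w (m + 2) = (1 - w ^ Suc m) * qF w m"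
proof -
  have s1: "qF w (m + 2) = 1 + (\<Sum>i\<le>Suc m. (-1) ^ Suc i * qb w (Suc (Suc m)) (Suc i))"
    unfolding qF_def by (simp add: sum.atMost_Suc_shift del: sum.atMost_Suc)
  have s2: "(\<Sum>i\<le>Suc m. (-1) ^ Suc i * qb w (Suc (Suc m)) (Suc i))
     = (\<Sum>i\<le>Suc m. (-1) ^ Suc i * qb w (Suc m) i) + (\<Sum>i\<le>Suc m. (-1) ^ Suc i * (w ^ Suc i * qb w (Suc m) (Suc i)))"
  proof (subst sum.distrib[symmetric], rule sum.cong[OF refl])
    fix i assume "i \<in> {..Suc m}"
    then have "qb w (Suc (Suc m)) (Suc i) = qb w (Suc m) i + w ^ Suc i * qb w (Suc m) (Suc i)"
      by (intro qb_P nz) auto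
    then show "(-1) ^ Suc i * qb w (Suc (Suc m)) (Suc i) =
      (-1) ^ Suc i * qb w (Suc m) i + (-1) ^ Suc i * (w ^ Suc i * qb w (Suc m) (Suc i))"
      by (simp add: algebra_simps)
  qed
  have s3: "(\<Sum>i\<le>Suc m. (-1) ^ Suc i * qb w (Suc m) i) = -1 + (\<Sum>i\<le>m. (-1) ^ Suc (Suc i) * qb w (Suc m) (Suc i))"
    by (simp add: sum.atMost_Suc_shift del: sum.atMost_Suc)
  have s4: "(\<Sum>i\<le>Suc m. (-1) ^ Suc i * (w ^ Suc i * qb w (Suc m) (Suc i)))
     = (\<Sum>i\<le>m. (-1) ^ Suc i * (w ^ Suc i * qb w (Suc m) (Suc i)))"
    by (simp add: qb_zero)
  have "qF w (m + 2) = (\<Sum>i\<le>m. (-1) ^ i * ((1 - w ^ Suc i) * qb w (Suc m) (Suc i)))"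
    unfolding s1 s2 s3 s4 by (simp add: sum.distrib[symmetric] algebra_simps sum_subtractf[symmetric] sum_negf[symmetric])
  also have "\<dots> = (\<Sum>i\<le>m. (-1) ^ i * ((1 - w ^ Suc m) * qb w m i))"
  proof (rule sum.cong[OF refl])
    fix i assume "i \<in> {..m}"
    then have "(1 - w ^ Suc i) * qb w (Suc m) (Suc i) = (1 - w ^ Suc m) * qb w m i"
      by (intro qb_Q nz) auto
    then show "(-1) ^ i * ((1 - w ^ Suc i) * qb w (Suc m) (Suc i)) = (-1) ^ i * ((1 - w ^ Suc m) * qb w m i)"
      by simp
  qed
  also have "\<dots> = (1 - w ^ Suc m) * qF w m"
    unfolding qF_def by (simp add: sum_distrib_left algebra_simps)
  finally show ?thesis .
qed

lemma qF_even:
  assumes nz: "\<And>j. 0 < j \<Longrightarrow> j \<le> 2 * n \<Longrightarrow> w ^ j \<noteq> 1"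
  shows "qF w (2 * n) = (\<Prod>j<n. (1 - w ^ (2 * j + 1)))"
  using nz
proof (induction n)
  case 0 then show ?case by (simp add: qF_def)
next
  case (Suc n)
  have "qF w (2 * Suc n) = qF w (2 * n + 2)" by simp
  also have "\<dots> = (1 - w ^ Suc (2 * n)) * qF w (2 * n)"
    by (rule qF_step) (use Suc.prems in auto)
  also have "qF w (2 * n) = (\<Prod>j<n. (1 - w ^ (2 * j + 1)))"
    by (rule Suc.IH) (use Suc.prems in auto)
  finally show ?case by (simp add: mult.commute)
qed

lemma one_minus_exp':
  fixes y :: real
  shows "1 - exp (\<i> * of_real (2 * y)) = of_real (2 * sin y) * exp (\<i> * of_real (y - pi / 2))"
proof -
  have e1: "exp (\<i> * of_real (y - pi / 2)) = - \<i> * exp (\<i> * of_real y)"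
  proof -
    have "exp (\<i> * of_real (y - pi / 2)) = exp (\<i> * of_real y + \<i> * of_real (- (pi / 2)))"
      by (rule arg_cong[where f=exp]) (simp add: algebra_simps)
    also have "\<dots> = exp (\<i> * of_real y) * exp (\<i> * of_real (- (pi / 2)))" by (rule exp_add)
    also have "exp (\<i> * of_real (- (pi / 2))) = - \<i>"
      by (simp only: exp_Euler cos_of_real sin_of_real) simp
    finally show ?thesis by simp
  qed
  have s: "of_real (sin y) = (exp (\<i> * of_real y) - exp (- (\<i> * of_real y))) / (2 * \<i>)"
    using sin_exp_eq[of "of_real y"] by (simp add: sin_of_real)
  have e2: "exp (\<i> * of_real (2 * y)) = exp (\<i> * of_real y) * exp (\<i> * of_real y)"
    by (simp add: exp_add[symmetric] algebra_simps)
  have e3: "exp (- (\<i> * of_real y)) * exp (\<i> * of_real y) = 1"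
    by (simp add: exp_minus)
  define E where "E = exp (\<i> * of_real y)"
  define E' where "E' = exp (- (\<i> * of_real y))"
  have l: "1 - exp (\<i> * of_real (2 * y)) = 1 - E * E" using e2 by (simp add: E_def)
  have r: "of_real (2 * sin y) * exp (\<i> * of_real (y - pi / 2)) = 2 * ((E - E') / (2 * \<i>)) * (- \<i> * E)"
    using e1 s by (simp add: E_def E'_def)
  have "E' * E = 1" using e3 by (simp add: E_def E'_def)
  then have "1 - E * E = 2 * ((E - E') / (2 * \<i>)) * (- \<i> * E)"
    by (simp add: field_simps)
  then show ?thesis using l r by simp
qed

lemma one_minus_exp:
  fixes x :: real
  shows "1 - exp (\<i> * of_real x) = of_real (2 * sin (x / 2)) * exp (\<i> * of_real (x / 2 - pi / 2))"
  using one_minus_exp'[of "x / 2"] by simp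

locale pp =
  fixes p :: nat
  assumes prime_p: "prime p"
begin

lemma p_gt1: "p > 1" using prime_p prime_gt_1_nat by blast
lemma p_pos: "p > 0" using p_gt1 by simp

lemma e_def': "eta_pow p t = exp (2 * pi * \<i> * of_int t / of_nat p)"
proof -
  have pz: "(of_nat p :: complex) \<noteq> 0" using p_pos by simp
  have t: "of_int t = (of_int (t mod int p) + of_nat p * of_int (t div int p) :: complex)"
    by (metis mod_div_mult_eq of_int_add of_int_mult of_int_of_nat_eq add.commute mult.commute)
  have "2 * pi * \<i> * of_int t / of_nat p
      = 2 * pi * \<i> * of_int (t mod int p) / of_nat p + \<i> * (of_int (t div int p) * (of_real pi * 2))"
    using pz by (subst t) (simp add: field_simps)
  then have "exp (2 * pi * \<i> * of_int t / of_nat p) = exp (2 * pi * \<i> * of_int (t mod int p) / of_nat p)"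
    by (simp add: exp_add exp_2pi_1_int)
  then show ?thesis by (simp add: eta_pow_def)
qed

lemma e_add: "eta_pow p (s + t) = eta_pow p s * eta_pow p t"
  unfolding e_def' by (simp add: exp_add[symmetric] add_divide_distrib distrib_left)

lemma e_0 [simp]: "eta_pow p 0 = 1" by (simp add: e_def')

lemma e_cong: "[s = t] (mod int p) \<Longrightarrow> eta_pow p s = eta_pow p t"
  by (simp add: eta_pow_def cong_def)

lemma e_mod: "eta_pow p (t mod int p) = eta_pow p t"
  by (simp add: eta_pow_def)

lemma e_dvd: "int p dvd t \<Longrightarrow> eta_pow p t = 1"
  by (simp add: eta_pow_def)

lemma e_neg: "eta_pow p (- t) * eta_pow p t = 1"
  using e_add[of "-t" t] by simp

lemma e_diff: "eta_pow p (s - t) = eta_pow p s * eta_pow p (- t)"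
  using e_add[of s "-t"] by simp

lemma e_pow: "eta_pow p t ^ n = eta_pow p (t * int n)"
  by (induction n) (simp_all add: e_add distrib_left mult.commute)

lemma e_eq1: "eta_pow p t = 1 \<longleftrightarrow> int p dvd t"
proof -
  have "eta_pow p t = exp (2 * pi * \<i> * of_nat (nat (t mod int p)) / of_nat p)"
    using p_pos by (simp add: eta_pow_def)
  also have "\<dots> = 1 \<longleftrightarrow> p dvd nat (t mod int p)"
    using complex_root_unity_eq_1[of p "nat (t mod int p)"] p_pos by simp
  also have "\<dots> \<longleftrightarrow> int p dvd t"
  proof -
    have "0 \<le> t mod int p" "t mod int p < int p" using p_pos by auto
    then have "p dvd nat (t mod int p) \<longleftrightarrow> t mod int p = 0"
      by (metis dvd_imp_le int_dvd_int_iff le_less nat_0_le nat_less_iff nat_neq_iff of_nat_0_less_iff p_pos dvd_0_right int_nat_eq not_less)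
    then show ?thesis by auto
  qed
  finally show ?thesis .
qed

lemma geom: "(\<Sum>n<p. eta_pow p (t * int n)) = (if int p dvd t then of_nat p else 0)"
proof (cases "int p dvd t")
  case True
  then have "\<And>n. eta_pow p (t * int n) = 1" by (intro e_dvd) simp
  then show ?thesis using True by simp
next
  case False
  then have ne: "eta_pow p t \<noteq> 1" using e_eq1 by simp
  have "(\<Sum>n<p. eta_pow p (t * int n)) = (\<Sum>n<p. eta_pow p t ^ n)" by (simp add: e_pow)
  also have "\<dots> = (eta_pow p t ^ p - 1) / (eta_pow p t - 1)" using ne geometric_sum by blast
  also have "eta_pow p t ^ p = 1" by (simp add: e_pow e_dvd)
  finally show ?thesis using False by simp
qed

lemma reindex:
  fixes f :: "int \<Rightarrow> complex"
  assumes per: "\<And>t. f (t mod int p) = f t" and cop: "coprime u (int p)"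
  shows "(\<Sum>n<p. f (u * int n + v)) = (\<Sum>n<p. f (int n))"
proof -
  define g where "g n = nat ((u * int n + v) mod int p)" for n
  have sub: "g ` {..<p} \<subseteq> {..<p}" unfolding g_def using p_pos
    by (auto simp: nat_less_iff)
  have inj: "inj_on g {..<p}"
  proof
    fix n n' assume "n \<in> {..<p}" "n' \<in> {..<p}" "g n = g n'"
    then have "(u * int n + v) mod int p = (u * int n' + v) mod int p"
      unfolding g_def using p_pos by (simp add: nat_eq_iff2)
    then have "[u * int n + v = u * int n' + v] (mod int p)" by (simp add: cong_def)
    then have "[u * int n = u * int n'] (mod int p)" using cong_add_rcancel by blast
    then have "[int n = int n'] (mod int p)" using cop cong_mult_lcancel by blast
    then show "n = n'" using \<open>n \<in> _\<close> \<open>n' \<in> _\<close>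
      by (simp add: cong_def)
  qed
  have img: "g ` {..<p} = {..<p}" using endo_inj_surj[OF _ sub inj] by simp
  have "(\<Sum>n<p. f (int n)) = (\<Sum>n\<in>g ` {..<p}. f (int n))" using img by simp
  also have "\<dots> = (\<Sum>n<p. f (int (g n)))" using sum.reindex[OF inj] by simp
  also have "\<dots> = (\<Sum>n<p. f (u * int n + v))"
    using p_pos by (intro sum.cong) (auto simp: g_def per)
  finally show ?thesis by simp
qed

lemma e_cnj: "cnj (eta_pow p t) = eta_pow p (- t)"
  by (simp add: e_def' exp_cnj)

end

locale pk = pp +
  fixes k :: nat
  assumes p_eq: "p = 4 * k + 1"
begin

definition G :: "int \<Rightarrow> complex" where
  "G b = (\<Sum>n<p. eta_pow p (b * int n ^ 2))"

lemma k_pos: "k > 0" using p_eq p_gt1 prime_p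
  by (metis One_nat_def add_0 mult_0_right nat_less_le not_prime_1 not_gr_zero)

lemma odd_p: "odd p" using p_eq by simp

lemma per_sq: "eta_pow p (b * (t mod int p)^2 + s) = eta_pow p (b * t^2 + s)"
  by (intro e_cong cong_add cong_mult cong_pow cong_refl) (simp add: cong_def)

lemma G_cong: "[b = b'] (mod int p) \<Longrightarrow> G b = G b'"
  unfolding G_def by (intro sum.cong refl e_cong cong_mult cong_refl)

lemma G_sq: assumes "coprime u (int p)" shows "G (b * u^2) = G b"
proof -
  have "G b = (\<Sum>n<p. eta_pow p (b * (u * int n + 0)^2))"
    unfolding G_def using reindex[of "\<lambda>t. eta_pow p (b * t^2)" u 0] per_sq[of b _ 0] assms by simp
  then show ?thesis unfolding G_def by (simp add: power_mult_distrib mult.assoc mult.left_commute)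
qed

lemma G_shift: "(\<Sum>n<p. eta_pow p (b * (int n + v)^2)) = G b"
  unfolding G_def using reindex[of "\<lambda>t. eta_pow p (b * t^2)" 1 v] per_sq[of b _ 0] by simp

lemma G_abs: assumes "\<not> int p dvd b" shows "G b * cnj (G b) = of_nat p"
proof -
  have "G b * cnj (G b) = (\<Sum>n'<p. \<Sum>n<p. eta_pow p (b * int n ^ 2) * eta_pow p (- (b * int n' ^ 2)))"
    unfolding G_def by (simp add: cnj_sum e_cnj sum_distrib_left sum_distrib_right)
  also have "\<dots> = (\<Sum>n'<p. \<Sum>n<p. eta_pow p (b * (int n + int n') ^ 2 - b * int n' ^ 2))"
  proof (rule sum.cong[OF refl])
    fix n' assume "n' \<in> {..<p}"
    have "(\<Sum>n<p. eta_pow p (b * (1 * int n + int n') ^ 2 - b * int n' ^ 2))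
        = (\<Sum>n<p. eta_pow p (b * (int n) ^ 2 - b * int n' ^ 2))"
      using reindex[of "\<lambda>t. eta_pow p (b * t ^ 2 - b * int n' ^ 2)" 1 "int n'"] per_sq[of b _ "- b * int n' ^ 2"]
      by simp
    then show "(\<Sum>n<p. eta_pow p (b * int n ^ 2) * eta_pow p (- (b * int n' ^ 2))) =
          (\<Sum>n<p. eta_pow p (b * (int n + int n') ^ 2 - b * int n' ^ 2))"
      by (simp add: e_add[symmetric])
  qed
  also have "\<dots> = (\<Sum>n'<p. \<Sum>n<p. eta_pow p (b * int n ^ 2) * eta_pow p ((2 * b * int n) * int n'))"
    by (intro sum.cong refl, subst e_add[symmetric], rule arg_cong[where f="eta_pow p"])
       (simp add: power2_eq_square algebra_simps)
  also have "\<dots> = (\<Sum>n<p. eta_pow p (b * int n ^ 2) * (\<Sum>n'<p. eta_pow p ((2 * b * int n) * int n')))"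
    unfolding sum_distrib_left by (rule sum.swap)
  also have "\<dots> = (\<Sum>n<p. (if n = 0 then of_nat p else 0))"
  proof (intro sum.cong refl)
    fix n assume n: "n \<in> {..<p}"
    have "int p dvd 2 * b * int n \<longleftrightarrow> n = 0"
    proof
      assume d: "int p dvd 2 * b * int n"
      have pr: "prime (int p)" using prime_p by simp
      have "\<not> int p dvd 2"
      proof
        assume "int p dvd 2"
        then have "int p \<le> 2" by (rule zdvd_imp_le) simp
        then show False using p_eq k_pos by simp
      qed
      then have "int p dvd int n" using d assms pr by (simp add: prime_dvd_mult_iff)
      then show "n = 0" using n by (auto dest: dvd_imp_le)
    qed simp
    then show "eta_pow p (b * int n ^ 2) * (\<Sum>n'<p. eta_pow p (2 * b * int n * int n')) =
         (if n = 0 then of_nat p else 0)"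
      by (simp add: geom)
  qed
  also have "\<dots> = of_nat p" using p_pos by simp
  finally show ?thesis .
qed

lemma G_total: "(\<Sum>b<p. G (int b)) = of_nat p"
proof -
  have "(\<Sum>b<p. G (int b)) = (\<Sum>n<p. \<Sum>b<p. eta_pow p ((int n ^ 2) * int b))"
    unfolding G_def by (subst sum.swap) (simp add: mult.commute)
  also have "\<dots> = (\<Sum>n<p. (if n = 0 then of_nat p else 0))"
  proof (intro sum.cong refl)
    fix n assume n: "n \<in> {..<p}"
    have "int p dvd int n ^ 2 \<longleftrightarrow> n = 0"
    proof
      assume "int p dvd int n ^ 2"
      then have "int p dvd int n" using prime_p
        by (metis prime_dvd_power prime_nat_iff_prime int_dvd_int_iff of_nat_power)
      then show "n = 0" using n by (auto dest: dvd_imp_le)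
    qed simp
    then show "(\<Sum>b<p. eta_pow p (int n ^ 2 * int b)) = (if n = 0 then of_nat p else 0)"
      by (simp add: geom)
  qed
  also have "\<dots> = of_nat p" using p_pos by simp
  finally show ?thesis .
qed

lemma G_0: "G 0 = of_nat p" by (simp add: G_def)

definition h :: int where "h = 2 * int k + 1"

lemma two_h: "2 * h = int p + 1" using p_eq by (simp add: h_def)

lemma w_pow: "eta_pow p (-1) ^ j = eta_pow p (- int j)"
  by (simp add: e_pow)

lemma w_nz: "0 < j \<Longrightarrow> j < p \<Longrightarrow> eta_pow p (-1) ^ j \<noteq> 1"
  by (simp add: w_pow e_eq1) (auto dest: dvd_imp_le)

lemma ratio: "(1 - eta_pow p s) / (1 - eta_pow p (- s)) = - eta_pow p s" if "1 - eta_pow p (- s) \<noteq> 0"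
proof -
  have "eta_pow p s * eta_pow p (- s) = 1" using e_neg[of s] by (simp add: mult.commute)
  then show ?thesis using that by (simp add: field_simps)
qed

lemma prodE: "(\<Prod>j<i. - eta_pow p (int j + 1)) = (-1) ^ i * eta_pow p (h * (int i ^ 2 + int i))"
proof (induction i)
  case (Suc i)
  have "[h * (int i ^ 2 + int i) + (int i + 1) = h * (int (Suc i) ^ 2 + int (Suc i))] (mod int p)"
  proof -
    have "h * (int (Suc i) ^ 2 + int (Suc i)) = h * (int i ^ 2 + int i) + (int i + 1) + int p * (int i + 1)"
      using two_h by (simp add: power2_eq_square algebra_simps)
    then show ?thesis by (simp add: cong_def)
  qed
  then have "eta_pow p (h * (int i ^ 2 + int i)) * eta_pow p (int i + 1) = eta_pow p (h * (int (Suc i) ^ 2 + int (Suc i)))"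
    by (simp add: e_add[symmetric] e_cong)
  then show ?case using Suc by (simp add: prod.lessThan_Suc algebra_simps)
qed simp

lemma qb_val: assumes "i \<le> p - 1"
  shows "qb (eta_pow p (-1)) (p - 1) i = (-1) ^ i * eta_pow p (h * (int i ^ 2 + int i))"
proof -
  let ?w = "eta_pow p (-1)"
  have "qb ?w (p - 1) i = (\<Prod>j<i. (1 - ?w ^ (p - 1 - j)) / (1 - ?w ^ Suc j))"
    unfolding qb_def by (simp add: prod_dividef)
  also have "\<dots> = (\<Prod>j<i. - eta_pow p (int j + 1))"
  proof (rule prod.cong[OF refl])
    fix j assume j: "j \<in> {..<i}"
    have A: "?w ^ (p - 1 - j) = eta_pow p (int j + 1)"
    proof -
      have "?w ^ (p - 1 - j) = eta_pow p (- int (p - 1 - j))" by (rule w_pow)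
      also have "\<dots> = eta_pow p (int j + 1)"
        using j assms p_pos by (intro e_cong) (simp add: cong_def of_nat_diff mod_eq_dvd_iff)
      finally show ?thesis .
    qed
    have B: "?w ^ Suc j = eta_pow p (- (int j + 1))" using w_pow[of "Suc j"] by (simp add: algebra_simps)
    have C: "1 - eta_pow p (- (int j + 1)) \<noteq> 0"
    proof -
      have "int j + 1 < int p" using j assms p_pos by auto
      then have "\<not> int p dvd (int j + 1)" by (auto dest: zdvd_imp_le)
      then have "\<not> int p dvd (- (int j + 1))" by (simp only: dvd_minus_iff) simp
      then have "eta_pow p (- (int j + 1)) \<noteq> 1" by (simp only: e_eq1 not_False_eq_True)
      then show ?thesis by auto
    qed
    show "(1 - ?w ^ (p - 1 - j)) / (1 - ?w ^ Suc j) = - eta_pow p (int j + 1)"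
      unfolding A B by (rule ratio[OF C])
  qed
  also have "\<dots> = (-1) ^ i * eta_pow p (h * (int i ^ 2 + int i))" by (rule prodE)
  finally show ?thesis .
qed

lemma qF_sum: "qF (eta_pow p (-1)) (p - 1) = eta_pow p (- (h ^ 3)) * G h"
proof -
  have "qF (eta_pow p (-1)) (p - 1) = (\<Sum>i\<le>p-1. eta_pow p (h * (int i ^ 2 + int i)))"
    unfolding qF_def
  proof (rule sum.cong[OF refl])
    fix i assume "i \<in> {..p-1}"
    then have "qb (eta_pow p (-1)) (p - 1) i = (-1) ^ i * eta_pow p (h * (int i ^ 2 + int i))"
      by (intro qb_val) auto
    moreover have "(-1::complex) ^ i * (-1) ^ i = 1" by (simp add: power_mult_distrib[symmetric])
    ultimately show "(-1) ^ i * qb (eta_pow p (-1)) (p - 1) i = eta_pow p (h * (int i ^ 2 + int i))"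
      by (simp add: mult.assoc[symmetric])
  qed
  also have "\<dots> = (\<Sum>i<p. eta_pow p (h * (int i ^ 2 + int i)))"
    using p_pos by (intro sum.cong refl) auto
  also have "\<dots> = (\<Sum>i<p. eta_pow p (h * (int i + h) ^ 2) * eta_pow p (- (h ^ 3)))"
  proof (rule sum.cong[OF refl])
    fix i
    have "h * (int i + h) ^ 2 + - (h ^ 3) = h * (int i ^ 2 + int i) + int p * (h * int i)"
      using two_h by (simp add: power2_eq_square power3_eq_cube algebra_simps)
    then have "[h * (int i + h) ^ 2 + - (h ^ 3) = h * (int i ^ 2 + int i)] (mod int p)"
      by (simp add: cong_def)
    then show "eta_pow p (h * (int i ^ 2 + int i)) = eta_pow p (h * (int i + h) ^ 2) * eta_pow p (- (h ^ 3))"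
      by (simp add: e_add[symmetric] e_cong)
  qed
  also have "\<dots> = eta_pow p (- (h ^ 3)) * G h"
    unfolding sum_distrib_right[symmetric] G_shift by (rule mult.commute)
  finally show ?thesis .
qed

lemma qF_prod: "qF (eta_pow p (-1)) (p - 1) = (\<Prod>j<2*k. (1 - eta_pow p (- (2 * int j + 1))))"
proof -
  have "p - 1 = 2 * (2 * k)" using p_eq by simp
  moreover have "qF (eta_pow p (-1)) (2 * (2 * k)) = (\<Prod>j<2*k. (1 - eta_pow p (-1) ^ (2 * j + 1)))"
    by (rule qF_even) (use w_nz p_eq in auto)
  ultimately have "qF (eta_pow p (-1)) (p - 1) = (\<Prod>j<2*k. (1 - eta_pow p (-1) ^ (2 * j + 1)))"
    by simp
  also have "\<dots> = (\<Prod>j<2*k. (1 - eta_pow p (- (2 * int j + 1))))"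
    by (rule prod.cong[OF refl]) (simp only: w_pow, simp add: algebra_simps)
  finally show ?thesis .
qed


lemma e_real: "eta_pow p t = exp (\<i> * of_real (2 * pi * of_int t / real p))"
  unfolding e_def' by (rule arg_cong[where f=exp]) (simp add: field_simps)

definition tt :: "nat \<Rightarrow> real" where "tt j = real p - 2 * real j - 1"

lemma factor: assumes "j < 2 * k"
  shows "1 - eta_pow p (- (2 * int j + 1)) = of_real (2 * sin (pi * tt j / real p)) * exp (\<i> * of_real (pi * tt j / real p - pi / 2))"
proof -
  have "int p - 2 * int j - 1 = (- (2 * int j + 1)) + int p" by simp
  then have "[- (2 * int j + 1) = int p - 2 * int j - 1] (mod int p)"
    by (simp only:) (simp add: cong_def)
  then have "eta_pow p (- (2 * int j + 1)) = eta_pow p (int p - 2 * int j - 1)"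
    by (rule e_cong)
  also have "\<dots> = exp (\<i> * of_real (2 * pi * tt j / real p))"
    unfolding e_real tt_def by simp
  finally have "1 - eta_pow p (- (2 * int j + 1)) = 1 - exp (\<i> * of_real (2 * pi * tt j / real p))" by simp
  also have "\<dots> = of_real (2 * sin (pi * tt j / real p)) * exp (\<i> * of_real (pi * tt j / real p - pi / 2))"
    using one_minus_exp[of "2 * pi * tt j / real p"] by simp
  finally show ?thesis .
qed

lemma sum_t: "(\<Sum>j<n. tt j) = real n * real p - real n ^ 2"
  by (induction n) (simp_all add: tt_def power2_eq_square algebra_simps)

definition R :: real where "R = (\<Prod>j<2*k. 2 * sin (pi * tt j / real p))"

lemma R_pos: "R > 0"
  unfolding R_def
proof (rule prod_pos)
  fix j assume "j \<in> {..<2*k}"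
  then have "real j + 1 \<le> 2 * real k" by simp
  then have t1: "tt j > 0" "tt j < real p" unfolding tt_def using p_eq by simp_all
  have "0 < pi * tt j / real p" using t1 p_pos by simp
  moreover have "pi * tt j / real p < pi" using t1 p_pos by (simp add: field_simps)
  ultimately show "0 < 2 * sin (pi * tt j / real p)" by (simp add: sin_gt_zero)
qed

lemma prod_val: "(\<Prod>j<2*k. (1 - eta_pow p (- (2 * int j + 1)))) = of_real R * exp (\<i> * of_real (pi * real k / real p))"
proof -
  have "(\<Prod>j<2*k. (1 - eta_pow p (- (2 * int j + 1))))
      = (\<Prod>j<2*k. of_real (2 * sin (pi * tt j / real p)) * exp (\<i> * of_real (pi * tt j / real p - pi / 2)))"
  proof (rule prod.cong[OF refl])
    fix j assume "j \<in> {..<2*k}"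
    then show "1 - eta_pow p (- (2 * int j + 1)) = of_real (2 * sin (pi * tt j / real p)) * exp (\<i> * of_real (pi * tt j / real p - pi / 2))"
      by (intro factor) auto
  qed
  also have "\<dots> = of_real R * (\<Prod>j<2*k. exp (\<i> * of_real (pi * tt j / real p - pi / 2)))"
    by (simp add: prod.distrib R_def of_real_prod)
  also have "(\<Prod>j<2*k. exp (\<i> * of_real (pi * tt j / real p - pi / 2)))
      = exp (\<i> * of_real (\<Sum>j<2*k. (pi * tt j / real p - pi / 2)))"
    by (simp add: exp_sum[symmetric] sum_distrib_left of_real_sum)
  also have "(\<Sum>j<2*k. (pi * tt j / real p - pi / 2)) = pi / real p * (\<Sum>j<2*k. tt j) - real (2 * k) * (pi / 2)"
    by (simp add: sum_subtractf sum_distrib_left sum_divide_distrib)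
  also have "\<dots> = pi * real k / real p"
  proof -
    have rp: "real p = 4 * real k + 1" using p_eq by simp
    show ?thesis unfolding sum_t rp by (simp add: field_simps power2_eq_square)
  qed
  finally show ?thesis .
qed

lemma h_bounds: "0 < h" "h < int p" using p_eq k_pos by (simp_all add: h_def)

lemma G_h_raw: "G h = (-1) ^ k * of_real R"
proof -
  have "eta_pow p (- (h ^ 3)) * G h = of_real R * exp (\<i> * of_real (pi * real k / real p))"
    using qF_sum qF_prod prod_val by simp
  then have "eta_pow p (h ^ 3) * (eta_pow p (- (h ^ 3)) * G h) = eta_pow p (h ^ 3) * (of_real R * exp (\<i> * of_real (pi * real k / real p)))"
    by simp
  moreover have "eta_pow p (h ^ 3) * eta_pow p (- (h ^ 3)) = 1" using e_neg[of "h^3"] by (simp add: mult.commute)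
  ultimately have G1: "G h = of_real R * (eta_pow p (h ^ 3) * exp (\<i> * of_real (pi * real k / real p)))"
    by (simp add: mult.assoc[symmetric])
  define N where "N = 4 * k^2 + 5 * k + 2"
  have "eta_pow p (h ^ 3) * exp (\<i> * of_real (pi * real k / real p))
      = exp (\<i> * of_real (2 * pi * of_int (h ^ 3) / real p) + \<i> * of_real (pi * real k / real p))"
    by (simp add: e_real exp_add)
  also have "\<i> * of_real (2 * pi * of_int (h ^ 3) / real p) + \<i> * of_real (pi * real k / real p)
      = of_nat N * (\<i> * of_real pi)"
  proof -
    have rp: "real p = 4 * real k + 1" using p_eq by simp
    have rh: "real_of_int h = 2 * real k + 1" by (simp add: h_def)
    have poly: "2 * (2 * real k + 1) ^ 3 + real k = real N * real p"
      unfolding rp by (simp add: N_def power2_eq_square power3_eq_cube algebra_simps)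
    have "2 * pi * of_int (h ^ 3) / real p + pi * real k / real p = pi * (2 * (2 * real k + 1) ^ 3 + real k) / real p"
      by (simp add: rh add_divide_distrib algebra_simps)
    also have "\<dots> = pi * real N" unfolding poly using p_pos by simp
    finally have "2 * pi * of_int (h ^ 3) / real p + pi * real k / real p = pi * real N" .
    then have H: "of_real (2 * pi * of_int (h ^ 3) / real p + pi * real k / real p) = (of_real (pi * real N) :: complex)"
      by simp
    have "\<i> * of_real (2 * pi * of_int (h ^ 3) / real p) + \<i> * of_real (pi * real k / real p)
        = \<i> * of_real (2 * pi * of_int (h ^ 3) / real p + pi * real k / real p)"
      by (simp only: of_real_add distrib_left)
    also have "\<dots> = \<i> * of_real (pi * real N)" by (simp only: H)
    also have "\<dots> = of_nat N * (\<i> * of_real pi)" by simp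
    finally show ?thesis .
  qed
  also have "exp (of_nat N * (\<i> * of_real pi)) = (-1) ^ N"
    by (simp add: exp_of_nat_mult exp_pi_i')
  also have "(-1::complex) ^ N = (-1) ^ k"
  proof -
    have "N = k + 2 * (2 * k^2 + 2 * k + 1)" by (simp add: N_def)
    then show ?thesis by (simp add: power_add power_mult)
  qed
  finally show ?thesis using G1 by simp
qed

lemma G_h: "G h = (-1) ^ k * of_real (sqrt (real p))"
proof -
  have "\<not> int p dvd h" using h_bounds by (auto dest: zdvd_imp_le)
  then have "G h * cnj (G h) = of_nat p" by (rule G_abs)
  then have "of_real (R * R) = (of_nat p :: complex)"
    unfolding G_h_raw by (simp add: power_mult_distrib[symmetric] mult_ac)
  then have "R * R = real p" by (metis of_real_eq_iff of_real_of_nat_eq)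
  then have "R = sqrt (real p)" using R_pos by (metis abs_of_pos real_sqrt_abs2)
  then show ?thesis unfolding G_h_raw by simp
qed

end

locale pka = pk +
  fixes a :: nat
  assumes primroot: "residue_primroot p a"
begin

lemma gen_bij: "bij_betw (\<lambda>i. a ^ i mod p) {..<p-1} {0<..<p}"
  using residue_primroot_is_generator[OF p_gt1 primroot] prime_p
  by (simp add: totient_prime totatives_prime)

lemma coprime_a: "coprime (int a) (int p)"
  using primroot by (simp add: residue_primroot_def coprime_commute)

lemma G_step: "G (int a ^ (e + 2)) = G (int a ^ e)"
proof -
  have "G (int a ^ (e + 2)) = G (int a ^ e * (int a)^2)"
    by (rule arg_cong[where f=G]) (simp add: power_add power2_eq_square)
  then show ?thesis using G_sq[OF coprime_a, of "int a ^ e"] by simp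
qed

lemma G_par: "G (int a ^ e) = G (int a ^ (e mod 2))"
proof (induction e rule: less_induct)
  case (less e)
  show ?case
  proof (cases "e < 2")
    case True then show ?thesis by simp
  next
    case False
    then obtain e' where e': "e = e' + 2" by (metis add.commute le_add_diff_inverse not_less)
    then show ?thesis using less[of e'] G_step[of e'] by simp
  qed
qed

lemma sum_mod2: "(\<Sum>e<2*N. f (e mod 2)) = of_nat N * (f 0 + f (1::nat) :: complex)"
proof (induction N)
  case (Suc N)
  have "2 * Suc N = Suc (Suc (2 * N))" by simp
  moreover have "Suc (2 * N) mod 2 = 1" by presburger
  moreover have "(2 * N) mod 2 = 0" by presburger
  ultimately show ?case using Suc by (simp add: algebra_simps)
qed simp

lemma G_a: "G (int a) = - G 1"
proof -
  have "(\<Sum>e<p-1. G (int a ^ e)) = (\<Sum>i<p-1. G (int (a ^ i mod p)))"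
    by (intro sum.cong refl G_cong) (simp add: p_pos cong_def zmod_int of_nat_power[symmetric] del: of_nat_power)
  also have "\<dots> = (\<Sum>b\<in>{0<..<p}. G (int b))"
    using sum.reindex_bij_betw[OF gen_bij, of "\<lambda>b. G (int b)"] by simp
  also have "\<dots> = 0"
  proof -
    have "{..<p} = insert 0 {0<..<p}" using p_pos by auto
    then have "(\<Sum>b<p. G (int b)) = G 0 + (\<Sum>b\<in>{0<..<p}. G (int b))" by simp
    then show ?thesis using G_total G_0 by simp
  qed
  finally have "(\<Sum>e<p-1. G (int a ^ e)) = 0" .
  moreover have "(\<Sum>e<p-1. G (int a ^ e)) = of_nat (2*k) * (G 1 + G (int a))"
  proof -
    have "(\<Sum>e<p-1. G (int a ^ e)) = (\<Sum>e<2*(2*k). G (int a ^ (e mod 2)))"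
    proof -
      have "p - 1 = 2*(2*k)" using p_eq by simp
      then show ?thesis using G_par by simp
    qed
    also have "\<dots> = of_nat (2*k) * (G 1 + G (int a))"
      using sum_mod2[of "\<lambda>j. G (int a ^ j)" "2*k"] by simp
    finally show ?thesis .
  qed
  ultimately show ?thesis using k_pos by (simp add: add_eq_0_iff)
qed

lemma G_pow: "G (int a ^ e) = (-1) ^ e * G 1"
proof -
  have "e mod 2 = 0 \<or> e mod 2 = 1" by auto
  then show ?thesis
    by (subst G_par) (auto simp: G_a minus_one_power_iff)
qed

lemma G_mul: assumes "\<not> int p dvd b" shows "G (b * int a ^ e) = (-1) ^ e * G b"
proof -
  have "b mod int p \<noteq> 0" using assms by auto
  moreover have "0 \<le> b mod int p" "b mod int p < int p" using p_pos by auto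
  ultimately have "nat (b mod int p) \<in> {0<..<p}" by auto
  then have "nat (b mod int p) \<in> (\<lambda>i. a ^ i mod p) ` {..<p-1}"
    using gen_bij unfolding bij_betw_def by simp
  then obtain i where i: "i < p - 1" "a ^ i mod p = nat (b mod int p)"
    by auto
  have "int (a ^ i mod p) = (int a) ^ i mod int p" by (simp add: zmod_int)
  moreover have "int (nat (b mod int p)) = b mod int p" using p_pos by simp
  ultimately have "(int a) ^ i mod int p = b mod int p" using i(2) by metis
  then have bc: "[b = int a ^ i] (mod int p)" by (simp add: cong_def)
  have "G (b * int a ^ e) = G (int a ^ (i + e))"
    using bc by (intro G_cong) (simp add: power_add cong_mult cong_refl)
  moreover have "G b = G (int a ^ i)" using bc by (rule G_cong)
  ultimately show ?thesis using G_pow[of "i+e"] G_pow[of i] by (simp add: power_add)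
qed


lemma ord_a: "ord p a = p - 1"
  using primroot prime_p by (simp add: residue_primroot_def totient_prime)

lemma cop_pa: "coprime p a" using primroot by (simp add: residue_primroot_def)

lemma a_pos: "a > 0"
proof (rule ccontr)
  assume "\<not> a > 0" then have "a = 0" by simp
  then show False using cop_pa p_gt1 by simp
qed

definition c :: int where "c = int a ^ k"

lemma a_pow_p1: "[int a ^ (p - 1) = 1] (mod int p)"
proof -
  have "[a ^ (p - 1) = 1] (mod p)" using ord[of a p] ord_a by simp
  then show ?thesis using cong_int_iff[of "a ^ (p-1)" 1 p] by simp
qed

lemma c2: "[c * c = - 1] (mod int p)"
proof -
  define y where "y = int a ^ (2 * k)"
  have yy: "y * y = int a ^ (p - 1)" unfolding y_def using p_eq by (simp add: power_add[symmetric])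
  have "[y * y = 1] (mod int p)" using a_pow_p1 yy by simp
  moreover have "0 < y" unfolding y_def using a_pos by simp
  moreover have pr: "prime (int p)" using prime_p by simp
  ultimately have "[y = 1] (mod int p) \<or> [y = - 1] (mod int p)" using cong_square by blast
  moreover have "\<not> [y = 1] (mod int p)"
  proof
    assume "[y = 1] (mod int p)"
    then have "[a ^ (2 * k) = 1] (mod p)" unfolding y_def using cong_int_iff[of "a ^ (2*k)" 1 p] by simp
    moreover have "[a ^ (2 * k) \<noteq> 1] (mod p)" using ord_a p_eq k_pos by (intro ord_minimal) auto
    ultimately show False by simp
  qed
  ultimately have "[y = - 1] (mod int p)" by blast
  moreover have "c * c = y" unfolding c_def y_def by (simp add: power_add[symmetric] mult_2)
  ultimately show ?thesis by simp
qed

lemma c_dvd: "int p dvd c * c + 1"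
  using c2 by (simp add: cong_iff_dvd_diff)

lemma c_ndvd: "\<not> int p dvd c"
proof
  assume "int p dvd c"
  then have "int p dvd c * c" by simp
  then have "int p dvd 1" using c_dvd by (metis dvd_add_right_iff)
  then show False using p_gt1 by simp
qed

lemma a3k: "[int a ^ (3 * k) = - c] (mod int p)"
proof -
  have "int a ^ (3 * k) = int a ^ (k + k + k)" by (rule arg_cong[where f="\<lambda>n. int a ^ n"]) simp
  also have "\<dots> = (c * c) * c" unfolding c_def by (simp only: power_add)
  finally have "int a ^ (3 * k) = (c * c) * c" .
  moreover have "[(c * c) * c = (- 1) * c] (mod int p)" using c2 by (intro cong_mult cong_refl)
  ultimately show ?thesis by simp
qed

lemma inv2_eq: "inv2 p = h"
  unfolding inv2_def
proof (rule the_equality)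
  show "0 \<le> h \<and> h < int p \<and> [2 * h = 1] (mod int p)"
    using h_bounds two_h by (simp add: cong_def)
next
  fix t assume t: "0 \<le> t \<and> t < int p \<and> [2 * t = 1] (mod int p)"
  then have "[2 * t = 2 * h] (mod int p)" using two_h by (simp add: cong_def)
  moreover have "coprime 2 (int p)"
  proof -
    have "prime (int p)" using prime_p by simp
    moreover have "\<not> int p dvd 2" using p_eq k_pos by (auto dest: zdvd_imp_le)
    ultimately show ?thesis by (metis coprime_commute prime_imp_coprime)
  qed
  ultimately have "[t = h] (mod int p)" using cong_mult_lcancel by blast
  then show "t = h" using t h_bounds by (simp add: cong_def)
qed

lemma theta_pow: "theta p ^ n = exp (of_nat n * (2 * pi * \<i> / of_nat (p - 1)))"
  unfolding theta_def by (rule exp_of_nat_mult[symmetric])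

lemma theta_p1: "theta p ^ (p - 1) = 1"
proof -
  have "p - 1 > 0" using p_gt1 by simp
  then show ?thesis unfolding theta_pow by simp
qed

lemma theta_mod: "theta p ^ n = theta p ^ (n mod (p - 1))"
proof -
  have "theta p ^ n = theta p ^ ((p - 1) * (n div (p - 1)) + n mod (p - 1))" by simp
  also have "\<dots> = theta p ^ (n mod (p - 1))" by (simp only: power_add power_mult theta_p1) simp
  finally show ?thesis .
qed

lemma theta_3k: "theta p ^ (3 * k) = - \<i>"
proof -
  have "theta p ^ (3 * k) = exp (\<i> * of_real pi + \<i> * of_real (pi / 2))"
    unfolding theta_pow using p_eq k_pos by (intro arg_cong[where f=exp]) (simp add: field_simps)
  also have "\<dots> = - \<i>"
    by (simp only: exp_add exp_pi_i' exp_Euler cos_of_real sin_of_real cos_pi_half sin_pi_half) simp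
  finally show ?thesis .
qed

lemma dlog_ex1: assumes "j \<in> {1..p-1}" shows "\<exists>!m. m \<le> p - 2 \<and> [a ^ m = j] (mod p)"
proof -
  have "j \<in> {0<..<p}" using assms p_pos by auto
  then have "j \<in> (\<lambda>i. a ^ i mod p) ` {..<p-1}" using gen_bij unfolding bij_betw_def by simp
  then obtain i where i: "i < p - 1" "j = a ^ i mod p" by auto
  show ?thesis
  proof (rule ex1I[of _ i])
    show "i \<le> p - 2 \<and> [a ^ i = j] (mod p)" using i by (simp add: cong_def)
  next
    fix m assume m: "m \<le> p - 2 \<and> [a ^ m = j] (mod p)"
    then have "[a ^ m = a ^ i] (mod p)" using i by (simp add: cong_def)
    then have "[m = i] (mod (p - 1))" using order_divides_expdiff[OF cop_pa] ord_a by simp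
    moreover have "m < p - 1" using m p_eq k_pos by linarith
    ultimately show "m = i" using i by (simp add: cong_def)
  qed
qed

lemma dlog_spec: assumes "j \<in> {1..p-1}" shows "[a ^ dlog p a j = j] (mod p)"
  using theI'[OF dlog_ex1[OF assms]] unfolding dlog_def by simp

lemma chi: assumes "j \<in> {1..p-1}" "[a ^ e = j] (mod p)"
  shows "theta p ^ (x * dlog p a j) = theta p ^ (x * e)"
proof -
  have "[a ^ dlog p a j = a ^ e] (mod p)" using dlog_spec[OF assms(1)] assms(2) by (metis cong_sym cong_trans)
  then have "[dlog p a j = e] (mod (p - 1))" using order_divides_expdiff[OF cop_pa] ord_a by simp
  then have "[x * dlog p a j = x * e] (mod (p - 1))" by (intro cong_mult cong_refl)
  then show ?thesis by (metis theta_mod cong_def)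
qed

lemma G_hc: "G (h * c) = of_real (sqrt (real p))"
proof -
  have "\<not> int p dvd h" using h_bounds by (auto dest: zdvd_imp_le)
  then have "G (h * c) = (-1) ^ k * G h" unfolding c_def by (rule G_mul)
  also have "\<dots> = ((-1) ^ k * (-1) ^ k) * of_real (sqrt (real p))" by (simp add: G_h)
  also have "(-1::complex) ^ k * (-1) ^ k = 1" by (simp add: power_mult_distrib[symmetric])
  finally show ?thesis by simp
qed

lemma cong_PQ: assumes "A - B = (2 * h - 1) * U + (c * c + 1) * V" shows "[A = B] (mod int p)"
proof -
  have "2 * h - 1 = int p" using two_h by simp
  then have "int p dvd A - B" using assms c_dvd by simp
  then show ?thesis by (simp add: cong_iff_dvd_diff)
qed

lemma kdiv: "(p - 1) div 4 = k" using p_eq by simp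
lemma kdiv': "(p - Suc 0) div 4 = k" using p_eq by simp

lemma sqrt_inv: "complex_of_real (1 / sqrt (real p)) * complex_of_real (sqrt (real p)) = 1"
proof -
  have "sqrt (real p) > 0" using p_pos by simp
  then have "(1 / sqrt (real p)) * sqrt (real p) = 1" by simp
  then show ?thesis by (metis of_real_1 of_real_mult)
qed

lemma x0: "DFT p (phi p a 0) m = phi p a 0 m"
proof -
  define s where "s = complex_of_real (1 / sqrt (real p))"
  have ph: "\<And>n. phi p a 0 n = s * eta_pow p (h * c * int n ^ 2)"
    by (simp add: phi_def Let_def kdiv kdiv' inv2_eq c_def s_def)
  have "DFT p (phi p a 0) m = s * (\<Sum>n<p. eta_pow p (int m * int n) * (s * eta_pow p (h * c * int n ^ 2)))"
    by (simp add: DFT_def ph s_def)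
  also have "(\<Sum>n<p. eta_pow p (int m * int n) * (s * eta_pow p (h * c * int n ^ 2)))
      = s * (\<Sum>n<p. eta_pow p (h * c * (int n + (- c * int m)) ^ 2) * eta_pow p (h * c * int m ^ 2))"
    unfolding sum_distrib_left
  proof (rule sum.cong[OF refl])
    fix n
    have "[h * c * int n ^ 2 + int m * int n = h * c * (int n + (- c * int m)) ^ 2 + h * c * int m ^ 2] (mod int p)"
      by (rule cong_PQ[where U = "c * c * int m * int n" and V = "int m * int n - h * c * int m ^ 2"])
         (simp add: algebra_simps power2_eq_square)
    then have "eta_pow p (h * c * int n ^ 2 + int m * int n) = eta_pow p (h * c * (int n + (- c * int m)) ^ 2 + h * c * int m ^ 2)"
      by (rule e_cong)
    then show "eta_pow p (int m * int n) * (s * eta_pow p (h * c * int n ^ 2)) =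
        s * (eta_pow p (h * c * (int n + (- c * int m)) ^ 2) * eta_pow p (h * c * int m ^ 2))"
      by (simp add: e_add mult_ac)
  qed
  also have "(\<Sum>n<p. eta_pow p (h * c * (int n + (- c * int m)) ^ 2) * eta_pow p (h * c * int m ^ 2))
      = G (h * c) * eta_pow p (h * c * int m ^ 2)"
    unfolding sum_distrib_right[symmetric] G_shift ..
  finally have "DFT p (phi p a 0) m = (s * of_real (sqrt (real p))) * (s * eta_pow p (h * c * int m ^ 2))"
    unfolding G_hc by (simp add: mult_ac)
  also have "\<dots> = phi p a 0 m" unfolding ph using sqrt_inv by (simp add: s_def)
  finally show ?thesis .
qed

definition sig :: "nat \<Rightarrow> nat" where "sig j = nat ((- c * int j) mod int p)"

lemma cop_c: "coprime (- c) (int p)"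
proof -
  have "prime (int p)" using prime_p by simp
  then have "coprime (int p) c" using c_ndvd by (intro prime_imp_coprime)
  then show ?thesis by (simp add: coprime_commute)
qed

lemma sig_int: "int (sig j) = (- c * int j) mod int p"
  unfolding sig_def using p_pos by simp

lemma sig_cong: "[int (sig j) = - c * int j] (mod int p)"
  unfolding sig_int by (simp add: cong_def)

lemma sig_bij: "bij_betw sig {1..p-1} {1..p-1}"
proof -
  have sub: "sig ` {1..p-1} \<subseteq> {1..p-1}"
  proof
    fix y assume "y \<in> sig ` {1..p-1}"
    then obtain j where j: "j \<in> {1..p-1}" "y = sig j" by auto
    have "\<not> int p dvd int j" using j p_pos by (auto dest: dvd_imp_le)
    then have "\<not> int p dvd (- c * int j)"
      using c_ndvd prime_p by (simp add: prime_dvd_mult_iff)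
    then have "(- c * int j) mod int p \<noteq> 0" by (simp add: dvd_eq_mod_eq_0)
    moreover have "0 \<le> (- c * int j) mod int p" "(- c * int j) mod int p < int p" using p_pos by auto
    ultimately show "y \<in> {1..p-1}" unfolding j(2) sig_def by auto
  qed
  have inj: "inj_on sig {1..p-1}"
  proof
    fix j j' assume jj: "j \<in> {1..p-1}" "j' \<in> {1..p-1}" "sig j = sig j'"
    then have "[- c * int j = - c * int j'] (mod int p)"
      using sig_cong[of j] sig_cong[of j'] by (metis cong_sym cong_trans)
    then have "[int j = int j'] (mod int p)" using cop_c cong_mult_lcancel by blast
    moreover have "j < p" "j' < p" using jj p_pos by auto
    ultimately show "j = j'" by (simp add: cong_def)
  qed
  have "sig ` {1..p-1} = {1..p-1}" using endo_inj_surj[OF _ sub inj] by simp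
  then show ?thesis using inj by (simp add: bij_betw_def)
qed

lemma chi_sig: assumes "j \<in> {1..p-1}"
  shows "theta p ^ (x * dlog p a (sig j)) = (- \<i>) ^ x * theta p ^ (x * dlog p a j)"
proof -
  define d where "d = dlog p a j"
  have "sig j \<in> {1..p-1}" using sig_bij assms unfolding bij_betw_def by auto
  moreover have "[a ^ (3 * k + d) = sig j] (mod p)"
  proof -
    have "[int a ^ d = int j] (mod int p)"
      using dlog_spec[OF assms] cong_int_iff[of "a ^ d" j p] by (simp add: d_def)
    then have "[int a ^ (3 * k) * int a ^ d = - c * int j] (mod int p)"
      using a3k by (intro cong_mult)
    then have "[int a ^ (3 * k + d) = int (sig j)] (mod int p)"
      using sig_cong[of j] by (simp add: power_add) (metis cong_sym cong_trans)
    then show ?thesis using cong_int_iff[of "a ^ (3 * k + d)" "sig j" p] by simp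
  qed
  ultimately have "theta p ^ (x * dlog p a (sig j)) = theta p ^ (x * (3 * k + d))" by (rule chi)
  also have "\<dots> = (theta p ^ (3 * k)) ^ x * theta p ^ (x * d)"
  proof -
    have "x * (3 * k + d) = 3 * k * x + x * d" by (simp add: algebra_simps)
    then show ?thesis by (simp only: power_add power_mult)
  qed
  finally show ?thesis by (simp add: theta_3k d_def)
qed

lemma xpos: assumes "x \<noteq> 0" shows "DFT p (phi p a x) m = (- \<i>) ^ x * phi p a x m"
proof -
  define s where "s = complex_of_real (1 / sqrt (real p))"
  define C where "C = complex_of_real (1 / sqrt (real p * real (p - 1)))"
  define chi where "chi j = theta p ^ (x * dlog p a j)" for j
  define L where "L j n = c * (int j - int n) ^ 2 - h * c * int n ^ 2" for j n :: nat
  define R0 where "R0 j = h * c * int m ^ 2 + 2 * int j * int m - c * int j ^ 2" for j :: nat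
  define J where "J = {1..p-1}"
  have ph: "\<And>n. phi p a x n = C * (\<Sum>j\<in>J. chi j * eta_pow p (L j n))"
    using assms by (simp add: phi_def Let_def kdiv kdiv' inv2_eq c_def C_def chi_def L_def J_def)
  have s1: "DFT p (phi p a x) m = s * (\<Sum>n<p. eta_pow p (int m * int n) * (C * (\<Sum>j\<in>J. chi j * eta_pow p (L j n))))"
    by (simp add: DFT_def ph s_def)
  have s2: "(\<Sum>n<p. eta_pow p (int m * int n) * (C * (\<Sum>j\<in>J. chi j * eta_pow p (L j n))))
      = C * (\<Sum>j\<in>J. chi j * (\<Sum>n<p. eta_pow p (int m * int n + L j n)))"
  proof -
    have "(\<Sum>n<p. eta_pow p (int m * int n) * (C * (\<Sum>j\<in>J. chi j * eta_pow p (L j n))))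
        = (\<Sum>n<p. \<Sum>j\<in>J. C * (chi j * eta_pow p (int m * int n + L j n)))"
      by (simp add: sum_distrib_left e_add mult_ac)
    also have "\<dots> = (\<Sum>j\<in>J. \<Sum>n<p. C * (chi j * eta_pow p (int m * int n + L j n)))"
      by (rule sum.swap)
    also have "\<dots> = C * (\<Sum>j\<in>J. chi j * (\<Sum>n<p. eta_pow p (int m * int n + L j n)))"
      by (simp add: sum_distrib_left)
    finally show ?thesis .
  qed
  have s3: "\<And>j. (\<Sum>n<p. eta_pow p (int m * int n + L j n)) = G (h * c) * eta_pow p (R0 j)"
  proof -
    fix j
    define v where "v = - c * (int m - 2 * c * int j)"
    have "(\<Sum>n<p. eta_pow p (int m * int n + L j n)) = (\<Sum>n<p. eta_pow p (h * c * (int n + v) ^ 2) * eta_pow p (R0 j))"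
    proof (rule sum.cong[OF refl])
      fix n
      have "[int m * int n + L j n = h * c * (int n + v) ^ 2 + R0 j] (mod int p)"
        unfolding L_def R0_def v_def
        by (rule cong_PQ[where U = "- c * int n ^ 2 + c ^ 2 * int m * int n - 2 * c ^ 3 * int j * int n + 2 * c ^ 4 * int j * int m - 2 * c ^ 5 * int j ^ 2"
                         and V = "int m * int n - 2 * c * int j * int n - h * c * int m ^ 2 + 2 * (c ^ 2 - 1) * int j * int m - 2 * c * (c ^ 2 - 1) * int j ^ 2"])
           (simp add: algebra_simps power2_eq_square power3_eq_cube power4_eq_xxxx eval_nat_numeral)
      then show "eta_pow p (int m * int n + L j n) = eta_pow p (h * c * (int n + v) ^ 2) * eta_pow p (R0 j)"
        by (simp add: e_cong e_add[symmetric])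
    qed
    also have "\<dots> = G (h * c) * eta_pow p (R0 j)"
      unfolding sum_distrib_right[symmetric] G_shift ..
    finally show "(\<Sum>n<p. eta_pow p (int m * int n + L j n)) = G (h * c) * eta_pow p (R0 j)" .
  qed
  have "DFT p (phi p a x) m = (s * G (h * c)) * (C * (\<Sum>j\<in>J. chi j * eta_pow p (R0 j)))"
    unfolding s1 s2 s3 by (simp add: sum_distrib_left mult_ac)
  also have "s * G (h * c) = 1" unfolding G_hc s_def by (rule sqrt_inv)
  also have "(\<Sum>j\<in>J. chi j * eta_pow p (R0 j)) = (\<Sum>j\<in>J. chi (sig j) * eta_pow p (R0 (sig j)))"
    unfolding J_def using sum.reindex_bij_betw[OF sig_bij, of "\<lambda>j. chi j * eta_pow p (R0 j)"] by simp
  also have "\<dots> = (\<Sum>j\<in>J. (- \<i>) ^ x * (chi j * eta_pow p (L j m)))"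
  proof (rule sum.cong[OF refl])
    fix j assume j: "j \<in> J"
    have "chi (sig j) = (- \<i>) ^ x * chi j" unfolding chi_def using j unfolding J_def by (rule chi_sig)
    moreover have "eta_pow p (R0 (sig j)) = eta_pow p (L j m)"
    proof (rule e_cong)
      have "[R0 (sig j) = h * c * int m ^ 2 + 2 * (- c * int j) * int m - c * (- c * int j) ^ 2] (mod int p)"
        unfolding R0_def by (intro cong_add cong_diff cong_mult cong_pow cong_refl sig_cong)
      moreover have "[h * c * int m ^ 2 + 2 * (- c * int j) * int m - c * (- c * int j) ^ 2 = L j m] (mod int p)"
        unfolding L_def
        by (rule cong_PQ[where U = "c * int m ^ 2" and V = "- c * int j ^ 2"])
           (simp add: algebra_simps power2_eq_square)
      ultimately show "[R0 (sig j) = L j m] (mod int p)" by (rule cong_trans)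
    qed
    ultimately show "chi (sig j) * eta_pow p (R0 (sig j)) = (- \<i>) ^ x * (chi j * eta_pow p (L j m))"
      by simp
  qed
  also have "1 * (C * (\<Sum>j\<in>J. (- \<i>) ^ x * (chi j * eta_pow p (L j m)))) = (- \<i>) ^ x * phi p a x m"
    unfolding ph by (simp add: sum_distrib_left mult_ac)
  finally show ?thesis .
qed
end

theorem theorem4:
  fixes p a x :: nat
  assumes "prime p" and "[p = 1] (mod 4)"
    and "residue_primroot p a"
    and "x < p"
  shows "\<forall>m<p. DFT p (phi p a x) m = (- \<i>) ^ x * phi p a x m"
proof -
  have "p mod 4 = 1" using assms(2) by (simp add: cong_def)
  then have peq: "p = 4 * (p div 4) + 1" by presburger
  interpret pka p "p div 4" a
    using assms(1,3) peq by unfold_locales auto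
  show ?thesis
  proof (intro allI impI)
    fix m assume "m < p"
    show "DFT p (phi p a x) m = (- \<i>) ^ x * phi p a x m"
    proof (cases "x = 0")
      case True then show ?thesis using x0 by simp
    next
      case False then show ?thesis by (rule xpos)
    qed
  qed
qed

end
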